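(* For given cardinality vectors $\boldsymbol\varrho,\boldsymbol\varphi,\boldsymbol\psi$, the expected number of edges of the primary IDNC graph is \[ \mathbb E\big[|\mathcal E_\rho|\big]=\frac12\sum_{i=1}^M\psi_i\Bigg\{\sum_{k=1,k\ne i}^M\frac{\psi_k}{N}\Big(1+\frac{\varrho_k\varrho_i}{N-1}\Big)\Bigg\}. \]
   Context: A sender holds a frame $\mathcal N$ of $N\ge2$ packets and serves receivers $\mathcal M=\{1,\dots,M\}$. For each receiver $i$ there are sets $\mathcal H_i\subseteq\mathcal N$ (Has set), $\mathcal L_i=\mathcal N\setminus\mathcal H_i$ (Lacks set) and $\mathcal W_i\subseteq\mathcal L_i$ (Wants set), with cardinalities $\varrho_i=|\mathcal H_i|$, $\varphi_i=N-\varrho_i$, $\psi_i=|\mathcal W_i|$. The primary IDNC graph $\mathcal G_\rho$ has a vertex $v_{ij}$ for every receiver $i$ and every $j\in\mathcal W_i$; two distinct vertices $v_{ij},v_{kl}$ are adjacent iff (C1) $j=l$, or (C2) $j\in\mathcal H_k$ and $l\in\mathcal H_i$. $\mathcal E_\rho$ is its edge set. Expectations are taken in the model that ignores set contents: given the cardinalities, the pairs $(\mathcal H_k,\mathcal W_k)$, $k\in\mathcal M$, are independent, $\mathcal H_k$ is a uniformly random $\varrho_k$-element subset of $\mathcal N$, and given $\mathcal H_k$, $\mathcal W_k$ is a uniformly random $\psi_k$-element subset of $\mathcal N\setminus\mathcal H_k$. *)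

theory Defs
  imports "HOL-Probability.Probability"
begin

text \<open>Packets are \<open>{1..N}\<close>, receivers are \<open>{1..M}\<close>.
  A configuration assigns to each receiver k its pair (Has set, Wants set).\<close>

definition idnc_vertices :: "nat \<Rightarrow> (nat \<Rightarrow> nat set) \<Rightarrow> (nat \<times> nat) set" where
  "idnc_vertices M W = {(i, j). i \<in> {1..M} \<and> j \<in> W i}"

definition idnc_adj :: "(nat \<Rightarrow> nat set) \<Rightarrow> nat \<times> nat \<Rightarrow> nat \<times> nat \<Rightarrow> bool" where
  "idnc_adj H v w = (case v of (i, j) \<Rightarrow> case w of (k, l) \<Rightarrow>
      j = l \<or> (j \<in> H k \<and> l \<in> H i))"

definition idnc_edges :: "nat \<Rightarrow> (nat \<Rightarrow> nat set) \<Rightarrow> (nat \<Rightarrow> nat set) \<Rightarrow> (nat \<times> nat) set set" where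
  "idnc_edges M H W = {{v, w} | v w. v \<in> idnc_vertices M W \<and> w \<in> idnc_vertices M W
      \<and> v \<noteq> w \<and> idnc_adj H v w}"

definition receiver_pmf :: "nat \<Rightarrow> nat \<Rightarrow> nat \<Rightarrow> (nat set \<times> nat set) pmf" where
  "receiver_pmf N \<rho> \<psi> =
     do { H \<leftarrow> pmf_of_set {H. H \<subseteq> {1..N} \<and> card H = \<rho>};
          W \<leftarrow> pmf_of_set {W. W \<subseteq> {1..N} - H \<and> card W = \<psi>};
          return_pmf (H, W) }"

definition config_pmf :: "nat \<Rightarrow> nat \<Rightarrow> (nat \<Rightarrow> nat) \<Rightarrow> (nat \<Rightarrow> nat)
    \<Rightarrow> (nat \<Rightarrow> nat set \<times> nat set) pmf" where
  "config_pmf N M \<rho> \<psi> = Pi_pmf {1..M} ({}, {}) (\<lambda>k. receiver_pmf N (\<rho> k) (\<psi> k))"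

end

theory Submission
  imports Defs
begin


definition ksub :: "nat set \<Rightarrow> nat \<Rightarrow> nat set set" where
  "ksub A k = {X. X \<subseteq> A \<and> card X = k}"

lemma ksub_finite: "finite A \<Longrightarrow> finite (ksub A k)"
  unfolding ksub_def by (rule finite_subset[of _ "Pow A"]) auto

lemma ksub_card: "finite A \<Longrightarrow> card (ksub A k) = card A choose k"
  unfolding ksub_def by (rule n_subsets)

lemma ksub_ne: "finite A \<Longrightarrow> k \<le> card A \<Longrightarrow> ksub A k \<noteq> {}"
  using ksub_card[of A k] by (metis card.empty zero_less_binomial_iff less_irrefl)

lemma ksub_avoid: assumes "finite A"
  shows "card {X\<in>ksub A k. B \<inter> X = {}} = card (A - B) choose k"
proof -
  have "{X\<in>ksub A k. B \<inter> X = {}} = ksub (A - B) k" unfolding ksub_def by auto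
  then show ?thesis using ksub_card[of "A - B" k] assms by simp
qed

lemma exp_ksub: assumes "finite A" "k \<le> card A"
  shows "measure_pmf.expectation (pmf_of_set (ksub A k)) f = (\<Sum>X\<in>ksub A k. f X) / real (card A choose k)"
  using assms by (simp add: integral_pmf_of_set ksub_finite ksub_ne ksub_card)

lemma exp_notin: assumes "finite A" "k \<le> card A" "j \<in> A"
  shows "measure_pmf.expectation (pmf_of_set (ksub A k)) (\<lambda>X. of_bool (j \<notin> X))
        = real (card A - k) / real (card A)"
proof -
  let ?m = "card A"
  have "(\<Sum>X\<in>ksub A k. of_bool (j \<notin> X) :: real) = real (card {X\<in>ksub A k. {j} \<inter> X = {}})"
    using assms by (simp add: sum.If_cases ksub_finite Int_def)
  also have "\<dots> = real ((?m - 1) choose k)" using ksub_avoid[OF assms(1), of k "{j}"] assms by simp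
  finally have s: "(\<Sum>X\<in>ksub A k. of_bool (j \<notin> X) :: real) = real ((?m - 1) choose k)" .
  have m: "?m > 0" using assms card_gt_0_iff by blast
  have c: "(?m choose k) > 0" using assms by simp
  have "real (?m - k) * real (?m choose k) = real ?m * real ((?m - 1) choose k)"
    using binomial_absorb_comp[of ?m k] by (metis of_nat_mult)
  then have "real ((?m - 1) choose k) * real ?m = real (?m - k) * real (?m choose k)" by simp
  then show ?thesis using m c unfolding exp_ksub[OF assms(1,2)] s
    by (subst frac_eq_eq) auto
qed

lemma exp_notin2: assumes "finite A" "k \<le> card A" "j \<in> A" "l \<in> A" "j \<noteq> l"
  shows "measure_pmf.expectation (pmf_of_set (ksub A k)) (\<lambda>X. of_bool (j \<notin> X \<and> l \<notin> X))
        = real ((card A - k) * (card A - 1 - k)) / real (card A * (card A - 1))"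
proof -
  let ?m = "card A"
  have "{X\<in>ksub A k. j \<notin> X \<and> l \<notin> X} = {X\<in>ksub A k. {j,l} \<inter> X = {}}" by auto
  then have "(\<Sum>X\<in>ksub A k. of_bool (j \<notin> X \<and> l \<notin> X) :: real) = real (card {X\<in>ksub A k. {j,l} \<inter> X = {}})"
    using assms by (simp add: sum.If_cases ksub_finite Int_def)
  also have "\<dots> = real ((?m - 2) choose k)" using ksub_avoid[OF assms(1), of k "{j,l}"] assms
    by (simp add: card_Diff_subset numeral_2_eq_2)
  finally have s: "(\<Sum>X\<in>ksub A k. of_bool (j \<notin> X \<and> l \<notin> X) :: real) = real ((?m - 2) choose k)" .
  have m: "?m \<ge> 2" using assms
    by (metis card_2_iff card_mono empty_subsetI insert_subset)
  have c: "(?m choose k) > 0" using assms by simp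
  have e1: "(?m - k) * (?m choose k) = ?m * ((?m - 1) choose k)" by (rule binomial_absorb_comp)
  have e2: "(?m - 1 - k) * ((?m - 1) choose k) = (?m - 1) * ((?m - 1 - 1) choose k)" by (rule binomial_absorb_comp)
  have "(?m - 1 - k) * (?m - k) * (?m choose k) = ?m * (?m - 1) * ((?m - 2) choose k)"
    using e1 e2 by (metis diff_diff_left mult.assoc mult.left_commute one_add_one)
  then have "real ((?m - k) * (?m - 1 - k)) * real (?m choose k) = real (?m * (?m - 1)) * real ((?m - 2) choose k)"
    by (metis mult.commute of_nat_mult)
  moreover have "real (?m * (?m - 1)) > 0" using m by simp
  ultimately show ?thesis using c unfolding exp_ksub[OF assms(1,2)] s
    by (subst frac_eq_eq) (auto simp: mult.commute)
qed


lemma exp_in: assumes "finite A" "k \<le> card A"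
  shows "measure_pmf.expectation (pmf_of_set (ksub A k)) (\<lambda>X. of_bool (j \<in> X))
        = (if j \<in> A then real k / real (card A) else 0)"
proof (cases "j \<in> A")
  case True
  have m: "card A > 0" using True assms card_gt_0_iff by blast
  have "(\<Sum>X\<in>ksub A k. of_bool (j \<in> X) :: real) = (\<Sum>X\<in>ksub A k. 1 - of_bool (j \<notin> X))"
    by (intro sum.cong) auto
  also have "\<dots> = real (card (ksub A k)) - (\<Sum>X\<in>ksub A k. of_bool (j \<notin> X))"
    by (simp add: sum_subtractf)
  finally have "measure_pmf.expectation (pmf_of_set (ksub A k)) (\<lambda>X. of_bool (j \<in> X))
     = (1::real) - measure_pmf.expectation (pmf_of_set (ksub A k)) (\<lambda>X. of_bool (j \<notin> X))"
    unfolding exp_ksub[OF assms] using assms by (simp add: ksub_card diff_divide_distrib)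
  also have "\<dots> = real k / real (card A)"
  proof -
    have nz: "real (card A) \<noteq> 0" using m by simp
    show ?thesis using exp_notin[OF assms True] assms nz
      by (simp add: of_nat_diff add_divide_distrib[symmetric] diff_divide_distrib)
  qed
  finally show ?thesis using True by simp
next
  case False
  have "(\<Sum>X\<in>ksub A k. of_bool (j \<in> X) :: real) = 0"
    using False by (intro sum.neutral) (auto simp: ksub_def)
  then show ?thesis using False assms by (simp add: exp_ksub)
qed

lemma exp_pair: assumes "finite A" "k \<le> card A" "j \<in> A" "l \<in> A" "j \<noteq> l"
  shows "measure_pmf.expectation (pmf_of_set (ksub A k)) (\<lambda>X. of_bool (l \<in> X \<and> j \<notin> X))
        = real k * real (card A - k) / (real (card A) * (real (card A) - 1))"
proof -
  let ?m = "card A"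
  have m: "?m \<ge> 2" using assms
    by (metis card_2_iff card_mono empty_subsetI insert_subset)
  have "(\<Sum>X\<in>ksub A k. of_bool (l \<in> X \<and> j \<notin> X) :: real)
     = (\<Sum>X\<in>ksub A k. of_bool (j \<notin> X) - of_bool (j \<notin> X \<and> l \<notin> X))"
    by (intro sum.cong) auto
  also have "\<dots> = (\<Sum>X\<in>ksub A k. of_bool (j \<notin> X)) - (\<Sum>X\<in>ksub A k. of_bool (j \<notin> X \<and> l \<notin> X))"
    by (simp add: sum_subtractf)
  finally have "measure_pmf.expectation (pmf_of_set (ksub A k)) (\<lambda>X. of_bool (l \<in> X \<and> j \<notin> X))
     = (measure_pmf.expectation (pmf_of_set (ksub A k)) (\<lambda>X. of_bool (j \<notin> X)) :: real)
       - measure_pmf.expectation (pmf_of_set (ksub A k)) (\<lambda>X. of_bool (j \<notin> X \<and> l \<notin> X))"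
    unfolding exp_ksub[OF assms(1,2)] by (simp add: diff_divide_distrib)
  also have "\<dots> = real (?m - k) / real ?m - real ((?m - k) * (?m - 1 - k)) / real (?m * (?m - 1))"
    using exp_notin[OF assms(1,2,3)] exp_notin2[OF assms] by simp
  also have "\<dots> = real k * real (?m - k) / (real ?m * (real ?m - 1))"
  proof (cases "k = ?m")
    case True then show ?thesis by simp
  next
    case False
    then have "k < ?m" using assms by simp
    then have "real (?m - 1 - k) = real ?m - 1 - real k" "real (?m - 1) = real ?m - 1" using m by auto
    then show ?thesis using m by (simp add: field_simps)
  qed
  finally show ?thesis .
qed

lemma recv_exp:
  fixes h :: "nat set \<times> nat set \<Rightarrow> real"
  assumes "r \<le> N" "p \<le> N - r"
  shows "measure_pmf.expectation (receiver_pmf N r p) h =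
     measure_pmf.expectation (pmf_of_set (ksub {1..N} r))
       (\<lambda>H. measure_pmf.expectation (pmf_of_set (ksub ({1..N} - H) p)) (\<lambda>W. h (H, W)))"
proof -
  have cH: "card ({1..N} - H) = N - r" if "H \<in> ksub {1..N} r" for H
  proof -
    have "H \<subseteq> {1..N}" "card H = r" using that by (auto simp: ksub_def)
    moreover then have "finite H" using finite_subset by blast
    ultimately show ?thesis by (simp add: card_Diff_subset)
  qed
  have ne: "ksub ({1..N} - H) p \<noteq> {}" if "H \<in> ksub {1..N} r" for H
    using ksub_ne[of "{1..N} - H" p] cH[OF that] assms by simp
  have rp: "receiver_pmf N r p = pmf_of_set (ksub {1..N} r) \<bind> (\<lambda>H. map_pmf (\<lambda>W. (H, W)) (pmf_of_set (ksub ({1..N} - H) p)))"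
    unfolding receiver_pmf_def ksub_def map_pmf_def by simp
  have "measure_pmf.expectation (receiver_pmf N r p) h =
     (\<Sum>H\<in>ksub {1..N} r. measure_pmf.expectation (map_pmf (\<lambda>W. (H, W)) (pmf_of_set (ksub ({1..N} - H) p))) h /\<^sub>R real (card (ksub {1..N} r)))"
    unfolding rp
    by (rule pmf_expectation_bind_pmf_of_set)
       (use ksub_ne[of "{1..N}" r] assms ne in \<open>auto simp: ksub_finite\<close>)
  also have "\<dots> = measure_pmf.expectation (pmf_of_set (ksub {1..N} r))
       (\<lambda>H. measure_pmf.expectation (pmf_of_set (ksub ({1..N} - H) p)) (\<lambda>W. h (H, W)))"
    using ksub_ne[of "{1..N}" r] assms
    by (simp add: integral_pmf_of_set ksub_finite sum_divide_distrib divide_inverse_commute sum_distrib_left)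
  finally show ?thesis .
qed

lemma recv_W:
  assumes "r \<le> N" "p \<le> N - r" "j \<in> {1..N}"
  shows "measure_pmf.expectation (receiver_pmf N r p) (\<lambda>x. of_bool (j \<in> snd x)) = real p / real N"
proof -
  have cH: "card ({1..N} - H) = N - r" if "H \<in> ksub {1..N} r" for H
  proof -
    have "H \<subseteq> {1..N}" "card H = r" using that by (auto simp: ksub_def)
    moreover then have "finite H" using finite_subset by blast
    ultimately show ?thesis by (simp add: card_Diff_subset)
  qed
  have "measure_pmf.expectation (receiver_pmf N r p) (\<lambda>x. of_bool (j \<in> snd x)) =
     measure_pmf.expectation (pmf_of_set (ksub {1..N} r)) (\<lambda>H. real p / real (N - r) * of_bool (j \<notin> H))"
  proof -
    have inner: "measure_pmf.expectation (pmf_of_set (ksub ({1..N} - H) p)) (\<lambda>W. of_bool (j \<in> W))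
       = real p / real (N - r) * of_bool (j \<notin> H)" if "H \<in> ksub {1..N} r" for H
      using exp_in[of "{1..N} - H" p j] cH[OF that] assms by auto
    have ne: "ksub {1..N} r \<noteq> {}" using ksub_ne[of "{1..N}" r] assms by simp
    show ?thesis unfolding recv_exp[OF assms(1,2)]
      apply (rule integral_cong_AE)
        apply simp
       apply simp
      apply (rule AE_pmfI)
      apply (simp only: prod.sel)
      apply (rule inner)
      using set_pmf_of_set[OF ne ksub_finite[OF finite_atLeastAtMost]] by blast
  qed
  also have "\<dots> = real p / real (N - r) * (real (N - r) / real N)"
    using exp_notin[of "{1..N}" r j] assms by simp
  also have "\<dots> = real p / real N"
    using assms by (cases "N - r = 0") auto
  finally show ?thesis .
qed

lemma recv_WH:
  assumes "r \<le> N" "p \<le> N - r" "j \<in> {1..N}" "l \<in> {1..N}" "j \<noteq> l"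
  shows "measure_pmf.expectation (receiver_pmf N r p) (\<lambda>x. of_bool (j \<in> snd x \<and> l \<in> fst x))
     = real r * real p / (real N * (real N - 1))"
proof -
  have cH: "card ({1..N} - H) = N - r" if "H \<in> ksub {1..N} r" for H
  proof -
    have "H \<subseteq> {1..N}" "card H = r" using that by (auto simp: ksub_def)
    moreover then have "finite H" using finite_subset by blast
    ultimately show ?thesis by (simp add: card_Diff_subset)
  qed
  have "measure_pmf.expectation (receiver_pmf N r p) (\<lambda>x. of_bool (j \<in> snd x \<and> l \<in> fst x)) =
     measure_pmf.expectation (pmf_of_set (ksub {1..N} r)) (\<lambda>H. real p / real (N - r) * of_bool (l \<in> H \<and> j \<notin> H))"
  proof -
    have inner: "measure_pmf.expectation (pmf_of_set (ksub ({1..N} - H) p)) (\<lambda>W. of_bool (j \<in> W \<and> l \<in> H))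
       = real p / real (N - r) * of_bool (l \<in> H \<and> j \<notin> H)" if "H \<in> ksub {1..N} r" for H
    proof -
      have "measure_pmf.expectation (pmf_of_set (ksub ({1..N} - H) p)) (\<lambda>W. of_bool (j \<in> W \<and> l \<in> H))
        = measure_pmf.expectation (pmf_of_set (ksub ({1..N} - H) p)) (\<lambda>W. of_bool (l \<in> H) * of_bool (j \<in> W) :: real)"
        by (intro Bochner_Integration.integral_cong) auto
      also have "\<dots> = of_bool (l \<in> H) * measure_pmf.expectation (pmf_of_set (ksub ({1..N} - H) p)) (\<lambda>W. of_bool (j \<in> W))"
        by (rule integral_mult_right_zero)
      finally show ?thesis
        using exp_in[of "{1..N} - H" p j] cH[OF that] assms by auto
    qed
    have ne: "ksub {1..N} r \<noteq> {}" using ksub_ne[of "{1..N}" r] assms by simp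
    show ?thesis unfolding recv_exp[OF assms(1,2)]
      apply (rule integral_cong_AE)
        apply simp
       apply simp
      apply (rule AE_pmfI)
      apply (simp only: prod.sel)
      apply (rule inner)
      using set_pmf_of_set[OF ne ksub_finite[OF finite_atLeastAtMost]] by blast
  qed
  also have "\<dots> = real p / real (N - r) * (real r * real (N - r) / (real N * (real N - 1)))"
    using exp_pair[of "{1..N}" r j l] assms by simp
  also have "\<dots> = real r * real p / (real N * (real N - 1))"
    using assms by (cases "N - r = 0") auto
  finally show ?thesis .
qed

lemma recv_support:
  assumes "r \<le> N" "p \<le> N - r" "x \<in> set_pmf (receiver_pmf N r p)"
  shows "fst x \<subseteq> {1..N} \<and> snd x \<subseteq> {1..N} - fst x"
proof -
  have cH: "card ({1..N} - H) = N - r" if "H \<in> ksub {1..N} r" for H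
  proof -
    have "H \<subseteq> {1..N}" "card H = r" using that by (auto simp: ksub_def)
    moreover then have "finite H" using finite_subset by blast
    ultimately show ?thesis by (simp add: card_Diff_subset)
  qed
  have ne: "ksub ({1..N} - H) p \<noteq> {}" if "H \<in> ksub {1..N} r" for H
    using ksub_ne[of "{1..N} - H" p] cH[OF that] assms by simp
  have rp: "receiver_pmf N r p = pmf_of_set (ksub {1..N} r) \<bind> (\<lambda>H. map_pmf (\<lambda>W. (H, W)) (pmf_of_set (ksub ({1..N} - H) p)))"
    unfolding receiver_pmf_def ksub_def map_pmf_def by simp
  show ?thesis using assms(3) ne ksub_ne[of "{1..N}" r] assms(1)
    unfolding rp by (auto simp: ksub_finite) (auto simp: ksub_def)
qed

lemma recv_finite:
  assumes "r \<le> N" "p \<le> N - r"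
  shows "finite (set_pmf (receiver_pmf N r p))"
proof (rule finite_subset[of _ "Pow {1..N} \<times> Pow {1..N}"])
  show "set_pmf (receiver_pmf N r p) \<subseteq> Pow {1..N} \<times> Pow {1..N}"
  proof
    fix x assume "x \<in> set_pmf (receiver_pmf N r p)"
    from recv_support[OF assms this] show "x \<in> Pow {1..N} \<times> Pow {1..N}" by (cases x) auto
  qed
qed auto

lemma recv_WH0:
  assumes "r \<le> N" "p \<le> N - r"
  shows "measure_pmf.expectation (receiver_pmf N r p) (\<lambda>x. of_bool (j \<in> snd x \<and> j \<in> fst x)) = 0"
  by (intro integral_eq_zero_AE) (use recv_support[OF assms] in \<open>auto simp: AE_measure_pmf_iff\<close>)



lemma adj_sym: "idnc_adj H v w = idnc_adj H w v"
  unfolding idnc_adj_def by (auto split: prod.splits)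

lemma vert_sub: "\<forall>i\<in>{1..M}. W i \<subseteq> {1..N} \<Longrightarrow> idnc_vertices M W \<subseteq> {1..M} \<times> {1..N}"
  unfolding idnc_vertices_def by auto

lemma card_P:
  assumes fin: "finite V"
  shows "card {(v,w). v \<in> V \<and> w \<in> V \<and> v \<noteq> w \<and> idnc_adj H v w}
       = 2 * card {{v, w} | v w. v \<in> V \<and> w \<in> V \<and> v \<noteq> w \<and> idnc_adj H v w}"
proof -
  define P where "P = {(v,w). v \<in> V \<and> w \<in> V \<and> v \<noteq> w \<and> idnc_adj H v w}"
  define f where "f = (\<lambda>(v::nat\<times>nat, w::nat\<times>nat). {v, w})"
  have finP: "finite P" unfolding P_def
    by (rule finite_subset[of _ "V \<times> V"]) (use fin in auto)
  have E: "{{v, w} | v w. v \<in> V \<and> w \<in> V \<and> v \<noteq> w \<and> idnc_adj H v w} = f ` P"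
    unfolding P_def f_def by auto
  have "card P = (\<Sum>e\<in>f ` P. card {p\<in>P. f p = e})"
    using sum.image_gen[OF finP, of "\<lambda>_. 1::nat" f] by simp
  also have "\<dots> = (\<Sum>e\<in>f ` P. 2)"
  proof (rule sum.cong[OF refl])
    fix e assume "e \<in> f ` P"
    then obtain v w where vw: "(v,w) \<in> P" and e: "e = {v,w}" unfolding f_def by auto
    have "{p\<in>P. f p = e} = {(v,w),(w,v)}"
      using vw adj_sym[of H v w] unfolding e P_def f_def by (auto simp: doubleton_eq_iff)
    then show "card {p\<in>P. f p = e} = 2" using vw unfolding P_def by auto
  qed
  also have "\<dots> = 2 * card (f ` P)" by simp
  finally show ?thesis unfolding E P_def by simp
qed

lemma sumV:
  fixes g :: "nat \<times> nat \<Rightarrow> real"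
  assumes "\<forall>i\<in>{1..M}. W i \<subseteq> {1..N}"
  shows "(\<Sum>v\<in>idnc_vertices M W. g v) = (\<Sum>i\<in>{1..M}. \<Sum>j\<in>{1..N}. of_bool (j \<in> W i) * g (i,j))"
proof -
  have "(\<Sum>v\<in>idnc_vertices M W. g v) = (\<Sum>v\<in>{1..M} \<times> {1..N}. of_bool (v \<in> idnc_vertices M W) * g v)"
    by (rule sum.mono_neutral_cong_right[symmetric]) (use vert_sub[OF assms] in auto)
  also have "\<dots> = (\<Sum>i\<in>{1..M}. \<Sum>j\<in>{1..N}. of_bool (j \<in> W i) * g (i,j))"
    unfolding sum.cartesian_product by (rule sum.cong) (auto simp: idnc_vertices_def)
  finally show ?thesis .
qed

lemma det:
  fixes H W :: "nat \<Rightarrow> nat set"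
  assumes A: "\<forall>i\<in>{1..M}. W i \<subseteq> {1..N} - H i"
  shows "2 * real (card (idnc_edges M H W)) =
    (\<Sum>i\<in>{1..M}. \<Sum>k\<in>{1..M}-{i}. (\<Sum>j\<in>{1..N}. of_bool (j \<in> W i \<and> j \<in> W k))
       + (\<Sum>j\<in>{1..N}. \<Sum>l\<in>{1..N}. of_bool (j \<in> W i \<and> l \<in> H i) * of_bool (l \<in> W k \<and> j \<in> H k)))"
proof -
  let ?V = "idnc_vertices M W"
  have WN: "\<forall>i\<in>{1..M}. W i \<subseteq> {1..N}" using A by auto
  have finV: "finite ?V" using vert_sub[OF WN] finite_subset by blast
  define X where "X = (\<lambda>v w. of_bool (v \<noteq> w \<and> idnc_adj H v w) :: real)"
  have "2 * real (card (idnc_edges M H W)) = real (card {(v,w). v \<in> ?V \<and> w \<in> ?V \<and> v \<noteq> w \<and> idnc_adj H v w})"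
    unfolding idnc_edges_def card_P[OF finV] by simp
  also have "{(v,w). v \<in> ?V \<and> w \<in> ?V \<and> v \<noteq> w \<and> idnc_adj H v w} = {p \<in> ?V \<times> ?V. X (fst p) (snd p) = 1}"
    unfolding X_def by auto
  also have "real (card \<dots>) = (\<Sum>p\<in>?V \<times> ?V. X (fst p) (snd p))"
    using finV by (simp add: X_def sum.If_cases Int_def)
  also have "\<dots> = (\<Sum>v\<in>?V. \<Sum>w\<in>?V. X v w)"
    by (subst sum.cartesian_product) (simp add: case_prod_beta)
  also have "\<dots> = (\<Sum>i\<in>{1..M}. \<Sum>j\<in>{1..N}. of_bool (j \<in> W i) *
                 (\<Sum>k\<in>{1..M}. \<Sum>l\<in>{1..N}. of_bool (l \<in> W k) * X (i,j) (k,l)))"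
    by (simp add: sumV[OF WN])
  also have "\<dots> = (\<Sum>i\<in>{1..M}. \<Sum>k\<in>{1..M}. \<Sum>j\<in>{1..N}. \<Sum>l\<in>{1..N}.
                    of_bool (j \<in> W i) * of_bool (l \<in> W k) * X (i,j) (k,l))"
    apply (simp only: sum_distrib_left mult.assoc)
    apply (rule sum.cong[OF refl])
    apply (rule sum.swap)
    done
  also have "\<dots> = (\<Sum>i\<in>{1..M}. \<Sum>k\<in>{1..M}-{i}. (\<Sum>j\<in>{1..N}. of_bool (j \<in> W i \<and> j \<in> W k))
       + (\<Sum>j\<in>{1..N}. \<Sum>l\<in>{1..N}. of_bool (j \<in> W i \<and> l \<in> H i) * of_bool (l \<in> W k \<and> j \<in> H k)))"
  proof (rule sum.cong[OF refl])
    fix i assume i: "i \<in> {1..M}"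
    have z: "(\<Sum>j\<in>{1..N}. \<Sum>l\<in>{1..N}. of_bool (j \<in> W i) * of_bool (l \<in> W i) * X (i,j) (i,l)) = 0"
    proof (intro sum.neutral ballI)
      fix j l
      have "j \<in> W i \<Longrightarrow> j \<notin> H i" using A i by auto
      then show "of_bool (j \<in> W i) * of_bool (l \<in> W i) * X (i,j) (i,l) = 0"
        by (cases "j \<in> W i") (simp_all add: X_def idnc_adj_def)
    qed
    have "(\<Sum>k\<in>{1..M}. \<Sum>j\<in>{1..N}. \<Sum>l\<in>{1..N}. of_bool (j \<in> W i) * of_bool (l \<in> W k) * X (i,j) (k,l))
        = (\<Sum>k\<in>{1..M}-{i}. \<Sum>j\<in>{1..N}. \<Sum>l\<in>{1..N}. of_bool (j \<in> W i) * of_bool (l \<in> W k) * X (i,j) (k,l))"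
      using sum.remove[of "{1..M}" i "\<lambda>k. \<Sum>j\<in>{1..N}. \<Sum>l\<in>{1..N}. of_bool (j \<in> W i) * of_bool (l \<in> W k) * X (i,j) (k,l) :: real"] i
      by (simp only: z add_0_left finite_atLeastAtMost)
    also have "\<dots> = (\<Sum>k\<in>{1..M}-{i}. (\<Sum>j\<in>{1..N}. of_bool (j \<in> W i \<and> j \<in> W k))
       + (\<Sum>j\<in>{1..N}. \<Sum>l\<in>{1..N}. of_bool (j \<in> W i \<and> l \<in> H i) * of_bool (l \<in> W k \<and> j \<in> H k)))"
    proof (rule sum.cong[OF refl])
      fix k assume k: "k \<in> {1..M} - {i}"
      have pw: "of_bool (j \<in> W i) * of_bool (l \<in> W k) * X (i,j) (k,l)
          = (if j = l then of_bool (j \<in> W i \<and> j \<in> W k) else 0)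
            + of_bool (j \<in> W i \<and> l \<in> H i) * of_bool (l \<in> W k \<and> j \<in> H k)" for j l
      proof -
        have "j \<in> W i \<Longrightarrow> j \<notin> H i" "l \<in> W k \<Longrightarrow> l \<notin> H k" "i \<noteq> k"
          using A i k by auto
        then show ?thesis
          by (cases "j \<in> W i"; cases "l \<in> W k"; cases "j = l") (auto simp: X_def idnc_adj_def)
      qed
      have d: "(\<Sum>l\<in>{1..N}. (if j = l then of_bool (j \<in> W i \<and> j \<in> W k) else 0) :: real)
               = of_bool (j \<in> W i \<and> j \<in> W k)" if "j \<in> {1..N}" for j
        using that by (simp add: sum.delta)
      show "(\<Sum>j\<in>{1..N}. \<Sum>l\<in>{1..N}. of_bool (j \<in> W i) * of_bool (l \<in> W k) * X (i,j) (k,l))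
         = (\<Sum>j\<in>{1..N}. of_bool (j \<in> W i \<and> j \<in> W k))
       + (\<Sum>j\<in>{1..N}. \<Sum>l\<in>{1..N}. of_bool (j \<in> W i \<and> l \<in> H i) * of_bool (l \<in> W k \<and> j \<in> H k))"
      proof -
        have "(\<Sum>j\<in>{1..N}. \<Sum>l\<in>{1..N}. of_bool (j \<in> W i) * of_bool (l \<in> W k) * X (i,j) (k,l))
          = (\<Sum>j\<in>{1..N}. \<Sum>l\<in>{1..N}. (if j = l then of_bool (j \<in> W i \<and> j \<in> W k) else 0))
          + (\<Sum>j\<in>{1..N}. \<Sum>l\<in>{1..N}. of_bool (j \<in> W i \<and> l \<in> H i) * of_bool (l \<in> W k \<and> j \<in> H k))"
          by (simp only: pw sum.distrib)
        also have "(\<Sum>j\<in>{1..N}. \<Sum>l\<in>{1..N}. (if j = l then of_bool (j \<in> W i \<and> j \<in> W k) else 0))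
             = (\<Sum>j\<in>{1..N}. of_bool (j \<in> W i \<and> j \<in> W k) :: real)"
          by (rule sum.cong[OF refl], erule d)
        finally show ?thesis .
      qed
    qed
    finally show "(\<Sum>k\<in>{1..M}. \<Sum>j\<in>{1..N}. \<Sum>l\<in>{1..N}. of_bool (j \<in> W i) * of_bool (l \<in> W k) * X (i,j) (k,l)) = \<dots>" .
  qed
  finally show ?thesis .
qed



lemma prod_two:
  fixes h :: "nat \<Rightarrow> real"
  assumes "finite A" "i \<in> A" "k \<in> A" "i \<noteq> k" "\<forall>x\<in>A-{i,k}. h x = 1"
  shows "prod h A = h i * h k"
proof -
  have "prod h A = h i * prod h (A - {i})" using assms by (simp add: prod.remove)
  also have "prod h (A - {i}) = h k * prod h (A - {i} - {k})" using assms by (intro prod.remove) auto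
  also have "prod h (A - {i} - {k}) = 1" using assms by (intro prod.neutral) auto
  finally show ?thesis by simp
qed

lemma config_support:
  assumes "\<forall>i\<in>{1..M}. \<rho> i \<le> N" "\<forall>i\<in>{1..M}. \<psi> i \<le> N - \<rho> i"
    and "c \<in> set_pmf (config_pmf N M \<rho> \<psi>)" "i \<in> {1..M}"
  shows "c i \<in> set_pmf (receiver_pmf N (\<rho> i) (\<psi> i))"
  using assms(3,4) unfolding config_pmf_def set_Pi_pmf[OF finite_atLeastAtMost] PiE_dflt_def by auto

lemma config_finite:
  assumes "\<forall>i\<in>{1..M}. \<rho> i \<le> N" "\<forall>i\<in>{1..M}. \<psi> i \<le> N - \<rho> i"
  shows "finite (set_pmf (config_pmf N M \<rho> \<psi>))"
  unfolding config_pmf_def set_Pi_pmf[OF finite_atLeastAtMost]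
  by (rule finite_PiE_dflt) (use assms recv_finite in auto)

lemma exp_two:
  fixes f g :: "nat set \<times> nat set \<Rightarrow> real"
  assumes A: "\<forall>i\<in>{1..M}. \<rho> i \<le> N" "\<forall>i\<in>{1..M}. \<psi> i \<le> N - \<rho> i"
    and ik: "i \<in> {1..M}" "k \<in> {1..M}" "i \<noteq> k"
    and nn: "\<And>x. f x \<ge> 0" "\<And>x. g x \<ge> 0"
  shows "measure_pmf.expectation (config_pmf N M \<rho> \<psi>) (\<lambda>c. f (c i) * g (c k))
     = measure_pmf.expectation (receiver_pmf N (\<rho> i) (\<psi> i)) f
       * measure_pmf.expectation (receiver_pmf N (\<rho> k) (\<psi> k)) g"
proof -
  define F where "F = (\<lambda>x. if x = i then f else if x = k then g else (\<lambda>_. 1::real))"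
  have p: "f (c i) * g (c k) = (\<Prod>x\<in>{1..M}. F x (c x))" for c :: "nat \<Rightarrow> nat set \<times> nat set"
    by (subst prod_two[of _ i k]) (use ik in \<open>auto simp: F_def\<close>)
  have "measure_pmf.expectation (config_pmf N M \<rho> \<psi>) (\<lambda>c. f (c i) * g (c k))
      = measure_pmf.expectation (config_pmf N M \<rho> \<psi>) (\<lambda>c. \<Prod>x\<in>{1..M}. F x (c x))"
    by (simp only: p)
  also have "\<dots> = (\<Prod>x\<in>{1..M}. measure_pmf.expectation (receiver_pmf N (\<rho> x) (\<psi> x)) (F x))"
    unfolding config_pmf_def
    by (rule expectation_prod_Pi_pmf)
       (use A nn in \<open>auto simp: F_def intro!: integrable_measure_pmf_finite recv_finite\<close>)
  also have "\<dots> = measure_pmf.expectation (receiver_pmf N (\<rho> i) (\<psi> i)) f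
       * measure_pmf.expectation (receiver_pmf N (\<rho> k) (\<psi> k)) g"
    by (subst prod_two[of _ i k]) (use ik in \<open>auto simp: F_def\<close>)
  finally show ?thesis .
qed

lemma sum_offdiag:
  fixes c :: real
  shows "(\<Sum>j\<in>{1..N}. \<Sum>l\<in>{1..N}. if j = l then 0 else c) = real N * (real N - 1) * c"
proof -
  have "(\<Sum>l\<in>{1..N}. if j = l then 0 else c) = (real N - 1) * c" if "j \<in> {1..N}" for j
  proof -
    have "(\<Sum>l\<in>{1..N}. if j = l then 0 else c) = (\<Sum>l\<in>{1..N} - {j}. c)"
      by (rule sum.mono_neutral_cong_right) auto
    also have "\<dots> = (real N - 1) * c" using that by (simp add: of_nat_diff)
    finally show ?thesis .
  qed
  then show ?thesis by simp
qed

lemma alg0: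
  fixes n d pi pk ri rk :: real
  assumes "n \<noteq> 0" "d \<noteq> 0"
  shows "n * (pi / n * (pk / n)) + n * d * (ri * pi / (n * d) * (rk * pk / (n * d)))
     = pi * (pk / n * (1 + rk * ri / d))"
  using assms by (simp add: field_simps)

lemma alg:
  fixes pi pk ri rk :: real
  assumes "N \<ge> 2"
  shows "(\<Sum>j\<in>{1..N}. pi / real N * (pk / real N))
     + real N * (real N - 1) * (ri * pi / (real N * (real N - 1)) * (rk * pk / (real N * (real N - 1))))
     = pi * (pk / real N * (1 + rk * ri / (real N - 1)))"
proof -
  have n: "real N \<noteq> 0" "real N - 1 \<noteq> 0" using assms by auto
  have "(\<Sum>j\<in>{1..N}. pi / real N * (pk / real N)) = real N * (pi / real N * (pk / real N))" by simp
  then show ?thesis using alg0[OF n, of pi pk ri rk] by simp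
qed

theorem theorem4:
  fixes N M :: nat and \<rho> \<psi> :: "nat \<Rightarrow> nat"
  assumes "N \<ge> 2"
    and "\<forall>i\<in>{1..M}. \<rho> i \<le> N"
    and "\<forall>i\<in>{1..M}. \<psi> i \<le> N - \<rho> i"
  shows "measure_pmf.expectation (config_pmf N M \<rho> \<psi>)
           (\<lambda>c. real (card (idnc_edges M (\<lambda>k. fst (c k)) (\<lambda>k. snd (c k)))))
         = 1/2 * (\<Sum>i=1..M. real (\<psi> i) *
              (\<Sum>k\<in>{1..M} - {i}. real (\<psi> k) / real N *
                  (1 + real (\<rho> k) * real (\<rho> i) / (real N - 1))))"
proof -
  let ?C = "config_pmf N M \<rho> \<psi>"
  let ?R = "\<lambda>i. receiver_pmf N (\<rho> i) (\<psi> i)"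
  have fin: "finite (set_pmf ?C)" using config_finite assms by blast
  note int = integrable_measure_pmf_finite[OF fin]
  define a where "a = (\<lambda>i k j (c :: nat \<Rightarrow> nat set \<times> nat set).
      of_bool (j \<in> snd (c i)) * (of_bool (j \<in> snd (c k)) :: real))"
  define b where "b = (\<lambda>i k j l (c :: nat \<Rightarrow> nat set \<times> nat set).
      of_bool (j \<in> snd (c i) \<and> l \<in> fst (c i)) * (of_bool (l \<in> snd (c k) \<and> j \<in> fst (c k)) :: real))"
  define F where "F = (\<lambda>c. \<Sum>i\<in>{1..M}. \<Sum>k\<in>{1..M}-{i}. (\<Sum>j\<in>{1..N}. a i k j c)
      + (\<Sum>j\<in>{1..N}. \<Sum>l\<in>{1..N}. b i k j l c))"
  have "measure_pmf.expectation ?C (\<lambda>c. real (card (idnc_edges M (\<lambda>k. fst (c k)) (\<lambda>k. snd (c k)))))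
      = measure_pmf.expectation ?C (\<lambda>c. 1/2 * F c)"
  proof (rule integral_cong_AE)
    show "AE c in measure_pmf ?C. real (card (idnc_edges M (\<lambda>k. fst (c k)) (\<lambda>k. snd (c k)))) = 1/2 * F c"
    proof (rule AE_pmfI)
      fix c assume c: "c \<in> set_pmf ?C"
      have "\<forall>i\<in>{1..M}. snd (c i) \<subseteq> {1..N} - fst (c i)"
        using recv_support config_support[OF assms(2,3) c] assms(2,3) by blast
      from det[OF this] show "real (card (idnc_edges M (\<lambda>k. fst (c k)) (\<lambda>k. snd (c k)))) = 1/2 * F c"
        unfolding F_def a_def b_def by (simp add: of_bool_conj)
    qed
  qed simp_all
  also have "\<dots> = 1/2 * (\<Sum>i\<in>{1..M}. \<Sum>k\<in>{1..M}-{i}.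
      (\<Sum>j\<in>{1..N}. measure_pmf.expectation ?C (a i k j))
      + (\<Sum>j\<in>{1..N}. \<Sum>l\<in>{1..N}. measure_pmf.expectation ?C (b i k j l)))"
    unfolding F_def by (simp add: int Bochner_Integration.integral_sum integral_add)
  also have "\<dots> = 1/2 * (\<Sum>i\<in>{1..M}. \<Sum>k\<in>{1..M}-{i}.
      (\<Sum>j\<in>{1..N}. (real (\<psi> i) / real N) * (real (\<psi> k) / real N))
      + (\<Sum>j\<in>{1..N}. \<Sum>l\<in>{1..N}. if j = l then 0 else
           (real (\<rho> i) * real (\<psi> i) / (real N * (real N - 1))) *
           (real (\<rho> k) * real (\<psi> k) / (real N * (real N - 1)))))"
  proof -
    have ea: "measure_pmf.expectation ?C (a i k j) = (real (\<psi> i) / real N) * (real (\<psi> k) / real N)"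
      if "i \<in> {1..M}" "k \<in> {1..M} - {i}" "j \<in> {1..N}" for i k j
      unfolding a_def using that assms
      by (subst exp_two[of M \<rho> N \<psi> i k]) (auto simp: recv_W)
    have eb: "measure_pmf.expectation ?C (b i k j l) = (if j = l then 0 else
           (real (\<rho> i) * real (\<psi> i) / (real N * (real N - 1))) *
           (real (\<rho> k) * real (\<psi> k) / (real N * (real N - 1))))"
      if "i \<in> {1..M}" "k \<in> {1..M} - {i}" "j \<in> {1..N}" "l \<in> {1..N}" for i k j l
      unfolding b_def using that assms
      by (subst exp_two[of M \<rho> N \<psi> i k]) (auto simp: recv_WH recv_WH0)
    show ?thesis using ea eb by (intro arg_cong[where f="\<lambda>x. 1/2 * x"] sum.cong refl) simp_all
  qed
  also have "\<dots> = 1/2 * (\<Sum>i=1..M. real (\<psi> i) *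
              (\<Sum>k\<in>{1..M} - {i}. real (\<psi> k) / real N *
                  (1 + real (\<rho> k) * real (\<rho> i) / (real N - 1))))"
  proof -
    have N: "real N \<ge> 2" using assms by simp
    show ?thesis unfolding sum_offdiag sum_distrib_left
      apply (intro arg_cong[where f="\<lambda>x. 1/2 * x"] sum.cong refl)
      apply (rule alg)
      using assms by simp
  qed
  finally show ?thesis .
qed


end
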